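(* Let $f$ be a $C^1$ diffeomorphism of a compact Riemannian manifold $M$ admitting a dominated splitting $TM=E\oplus_{\prec}F$. Then there is an $f$-invariant set $R\subset M$ with $\mu(R)=1$ for every $f$-invariant probability measure $\mu$ such that for every $x\in R$ and every linear subspace $V_{x}\subset T_{x}M$ with $\dim V_{x}=\dim F$, $$\lambda(x,V_{x})\leq\lambda(x,F(x)).$$
   Context: For $x\in M$ and a linear subspace $V\subset T_xM$, $\lambda(x,V)=\limsup_{n\to+\infty}\frac1n\log|\det Df^n_x|_V|$, where $|\det Df^n_x|_{V}|$ is the absolute determinant of $Df^n_x|_V:V\to Df^n_x(V)$ w.r.t. the Riemannian inner products. Dominated splitting $TM=E\oplus_{\prec}F$: $E,F$ continuous $Df$-invariant subbundles with constants $C>0,\lambda\in(0,1)$ such that $\frac{\|Df^k_x v_E\|}{\|v_E\|}\le C\lambda^k\frac{\|Df^k_x v_F\|}{\|v_F\|}$ for all $k\in\mathbb N$, $x\in M$, nonzero $v_E\in E(x),v_F\in F(x)$. *)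

theory Defs
  imports "HOL-Analysis.Analysis" "HOL-Probability.Probability_Measure"
begin

text \<open>The compact Riemannian manifold M is modelled as a compact embedded C1 submanifold
  of a Euclidean space (type 'a), with the induced Riemannian metric (Nash embedding).\<close>

definition C1_on :: "'a::euclidean_space set \<Rightarrow> ('a \<Rightarrow> 'b::euclidean_space) \<Rightarrow> bool" where
  "C1_on U g \<longleftrightarrow> (\<exists>g'. (\<forall>y\<in>U. (g has_derivative blinfun_apply (g' y)) (at y))
                       \<and> continuous_on U g')"

definition C1_submanifold :: "nat \<Rightarrow> 'a::euclidean_space set \<Rightarrow> bool" where
  "C1_submanifold d M \<longleftrightarrow>
     (\<forall>x\<in>M. \<exists>U (\<phi>::'a\<Rightarrow>'a) \<psi> S. open U \<and> x \<in> U \<and> open (\<phi> ` U) \<and>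
        C1_on U \<phi> \<and> C1_on (\<phi> ` U) \<psi> \<and> (\<forall>y\<in>U. \<psi> (\<phi> y) = y) \<and>
        subspace S \<and> dim S = d \<and> \<phi> ` (M \<inter> U) = \<phi> ` U \<inter> S)"

definition tangent_space :: "'a::euclidean_space set \<Rightarrow> 'a \<Rightarrow> 'a set" where
  "tangent_space M x = {v. \<exists>\<gamma>::real\<Rightarrow>'a. (\<forall>t. \<gamma> t \<in> M) \<and> \<gamma> 0 = x \<and>
                              (\<gamma> has_vector_derivative v) (at 0)}"

fun dfn :: "('a \<Rightarrow> 'a) \<Rightarrow> ('a \<Rightarrow> 'a \<Rightarrow>\<^sub>L 'a) \<Rightarrow> nat \<Rightarrow> 'a \<Rightarrow> 'a \<Rightarrow> 'a::real_normed_vector" where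
  "dfn f Df 0 x = id"
| "dfn f Df (Suc n) x = blinfun_apply (Df ((f ^^ n) x)) \<circ> dfn f Df n x"

definition gram_det :: "nat \<Rightarrow> (nat \<Rightarrow> nat \<Rightarrow> real) \<Rightarrow> real" where
  "gram_det k a = (\<Sum>p | p permutes {..<k}. of_int (sign p) * (\<Prod>i<k. a i (p i)))"

definition orthonormal_basis_of :: "'a::euclidean_space set \<Rightarrow> (nat \<Rightarrow> 'a) \<Rightarrow> bool" where
  "orthonormal_basis_of V b \<longleftrightarrow>
     (\<forall>i<dim V. \<forall>j<dim V. b i \<bullet> b j = (if i = j then 1 else 0)) \<and> span (b ` {..<dim V}) = V"

text \<open>Absolute determinant of L restricted to V, w.r.t. the inner products:
  sqrt of the Gram determinant of the images of an orthonormal basis of V.\<close>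
definition abs_det_on :: "('a::euclidean_space \<Rightarrow> 'a) \<Rightarrow> 'a set \<Rightarrow> real" where
  "abs_det_on L V = (let b = (SOME b. orthonormal_basis_of V b) in
      sqrt (gram_det (dim V) (\<lambda>i j. L (b i) \<bullet> L (b j))))"

definition lyap :: "('a::euclidean_space \<Rightarrow> 'a) \<Rightarrow> ('a \<Rightarrow> 'a \<Rightarrow>\<^sub>L 'a) \<Rightarrow> 'a \<Rightarrow> 'a set \<Rightarrow> ereal" where
  "lyap f Df x V = limsup (\<lambda>n. ereal (ln (abs_det_on (dfn f Df n x) V) / real n))"

definition continuous_subbundle :: "'a::euclidean_space set \<Rightarrow> ('a \<Rightarrow> 'a set) \<Rightarrow> bool" where
  "continuous_subbundle M E \<longleftrightarrow>
     (\<forall>x\<in>M. \<exists>W k (e::nat \<Rightarrow> 'a \<Rightarrow> 'a). open W \<and> x \<in> W \<and>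
        (\<forall>i<k. continuous_on (M \<inter> W) (e i)) \<and>
        (\<forall>y\<in>M \<inter> W. span ((\<lambda>i. e i y) ` {..<k}) = E y \<and> dim (E y) = k))"

definition dominated_splitting ::
  "'a::euclidean_space set \<Rightarrow> ('a \<Rightarrow> 'a) \<Rightarrow> ('a \<Rightarrow> 'a \<Rightarrow>\<^sub>L 'a) \<Rightarrow> ('a \<Rightarrow> 'a set) \<Rightarrow> ('a \<Rightarrow> 'a set) \<Rightarrow> bool" where
  "dominated_splitting M f Df E F \<longleftrightarrow>
     continuous_subbundle M E \<and> continuous_subbundle M F \<and>
     (\<forall>x\<in>M. subspace (E x) \<and> subspace (F x) \<and> E x \<inter> F x = {0} \<and>
        {u + v | u v. u \<in> E x \<and> v \<in> F x} = tangent_space M x \<and>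
        blinfun_apply (Df x) ` E x = E (f x) \<and> blinfun_apply (Df x) ` F x = F (f x)) \<and>
     (\<exists>C l. C > 0 \<and> 0 < l \<and> l < 1 \<and>
        (\<forall>k::nat. \<forall>x\<in>M. \<forall>vE\<in>E x. \<forall>vF\<in>F x. vE \<noteq> 0 \<longrightarrow> vF \<noteq> 0 \<longrightarrow>
          norm (dfn f Df k x vE) / norm vE \<le> C * l ^ k * (norm (dfn f Df k x vF) / norm vF)))"

definition C1_diffeo_on :: "'a::euclidean_space set \<Rightarrow> ('a \<Rightarrow> 'a) \<Rightarrow> ('a \<Rightarrow> 'a \<Rightarrow>\<^sub>L 'a) \<Rightarrow> bool" where
  "C1_diffeo_on M f Df \<longleftrightarrow>
     (\<exists>U. open U \<and> M \<subseteq> U \<and> (\<forall>y\<in>U. (f has_derivative blinfun_apply (Df y)) (at y))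
          \<and> continuous_on U Df) \<and>
     f ` M = M \<and> inj_on f M \<and>
     (\<exists>U' g. open U' \<and> M \<subseteq> U' \<and> C1_on U' g \<and> (\<forall>x\<in>M. g (f x) = x))"

definition invariant_prob :: "'a::euclidean_space set \<Rightarrow> ('a \<Rightarrow> 'a) \<Rightarrow> 'a measure \<Rightarrow> bool" where
  "invariant_prob M f \<mu> \<longleftrightarrow> prob_space \<mu> \<and> sets \<mu> = sets borel \<and> emeasure \<mu> M = 1 \<and>
     (\<forall>A \<in> sets borel. A \<subseteq> M \<longrightarrow> emeasure \<mu> (f -` A \<inter> M) = emeasure \<mu> A)"

end

theory Submission
  imports Defs Jordan_Normal_Form.Determinant "HOL-Combinatorics.List_Permutation"
begin


definition vol2 :: "'a::euclidean_space list \<Rightarrow> real" where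
  "vol2 xs = gram_det (length xs) (\<lambda>i j. inner (xs!i) (xs!j))"

lemma gram_det_last:
  assumes "\<forall>j<k. a k j = 0"
  shows "gram_det (Suc k) a = a k k * gram_det k a"
proof -
  let ?t = "\<lambda>p. of_int (sign p) * (\<Prod>i<Suc k. a i (p i)) :: real"
  have fin: "finite {p. p permutes {..<Suc k}}" by (simp add: finite_permutations)
  have sub: "{p. p permutes {..<k}} \<subseteq> {p. p permutes {..<Suc k}}"
    using permutes_subset by fastforce
  have zero: "?t p = 0" if "p \<in> {p. p permutes {..<Suc k}} - {p. p permutes {..<k}}" for p
  proof -
    from that have p: "p permutes {..<Suc k}" and np: "\<not> p permutes {..<k}" by auto
    have "p k \<noteq> k"
    proof
      assume "p k = k"
      then have "p permutes {..<k}" using p by (intro permutes_superset[OF p]) auto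
      with np show False by simp
    qed
    moreover have "p k < Suc k" using permutes_in_image[OF p] by simp
    ultimately have "a k (p k) = 0" using assms by simp
    then show ?thesis by (simp add: prod_zero)
  qed
  have "gram_det (Suc k) a = (\<Sum>p | p permutes {..<k}. ?t p)"
    unfolding gram_det_def
    using sum.mono_neutral_right[OF fin sub, of ?t] zero by simp
  also have "\<dots> = (\<Sum>p | p permutes {..<k}. a k k * (of_int (sign p) * (\<Prod>i<k. a i (p i))))"
  proof (rule sum.cong)
    fix p assume "p \<in> {p. p permutes {..<k}}"
    then have "p k = k" by (auto intro: permutes_not_in)
    then show "?t p = a k k * (of_int (sign p) * (\<Prod>i<k. a i (p i)))" by simp
  qed simp
  also have "\<dots> = a k k * gram_det k a" unfolding gram_det_def by (simp add: sum_distrib_left)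
  finally show ?thesis .
qed

lemma gram_det_mat: "gram_det k a = Determinant.det (Matrix.mat k k (\<lambda>(i,j). a i j))"
  by (subst det_def'[of _ k]) (auto simp: gram_det_def atLeast0LessThan intro!: sum.cong prod.cong)

lemma vol2_change:
  fixes xs ys :: "'a::euclidean_space list"
  assumes len: "length xs = k" "length ys = k"
    and ys: "\<And>i. i<k \<Longrightarrow> ys!i = (\<Sum>a<k. U a i *\<^sub>R xs!a)"
  shows "vol2 ys = (gram_det k U)^2 * vol2 xs"
proof -
  define Um where "Um = Matrix.mat k k (\<lambda>(a,i). U a i)"
  define G where "G = Matrix.mat k k (\<lambda>(a,b). inner (xs!a) (xs!b))"
  define G' where "G' = Matrix.mat k k (\<lambda>(a,b). inner (ys!a) (ys!b))"
  have Um: "Um \<in> carrier_mat k k" and G: "G \<in> carrier_mat k k" unfolding Um_def G_def by auto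
  have eq: "G' = transpose_mat Um * G * Um"
  proof (rule eq_matI)
    fix i j assume i: "i < dim_row (transpose_mat Um * G * Um)" and j: "j < dim_col (transpose_mat Um * G * Um)"
    then have i: "i < k" and j: "j < k" using Um G by auto
    have "(transpose_mat Um * G * Um) $$ (i,j) = (\<Sum>b<k. (\<Sum>a<k. U a i * (inner (xs!a) (xs!b))) * U b j)"
      using i j Um G by (simp add: scalar_prod_def Um_def G_def atLeast0LessThan)
    also have "\<dots> = inner (\<Sum>a<k. U a i *\<^sub>R xs!a) (\<Sum>b<k. U b j *\<^sub>R xs!b)"
      by (simp add: inner_sum_left inner_sum_right sum_distrib_left sum_distrib_right mult_ac)

    also have "\<dots> = G' $$ (i,j)" using i j by (simp add: G'_def ys)
    finally show "G' $$ (i, j) = (transpose_mat Um * G * Um) $$ (i, j)" by simp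
  qed (auto simp: G'_def Um_def G_def)
  have "vol2 ys = Determinant.det G'" unfolding vol2_def gram_det_mat G'_def using len by simp
  also have "\<dots> = Determinant.det (transpose_mat Um) * Determinant.det G * Determinant.det Um"
    unfolding eq using Um G
    by (simp add: det_mult[of _ k] )
  also have "\<dots> = (gram_det k U)^2 * vol2 xs"
    unfolding det_transpose[OF Um] using Um by (simp add: gram_det_mat vol2_def len Um_def G_def power2_eq_square)
  finally show ?thesis .
qed

lemma gram_det_cong:
  assumes "\<And>i j. i < k \<Longrightarrow> j < k \<Longrightarrow> a i j = b i j"
  shows "gram_det k a = gram_det k b"
  unfolding gram_det_def
proof (rule sum.cong[OF refl])
  fix p assume "p \<in> {p. p permutes {..<k}}"
  then have "\<And>i. i < k \<Longrightarrow> p i < k" using permutes_in_image by fastforce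
  then show "of_int (sign p) * (\<Prod>i<k. a i (p i)) = of_int (sign p) * (\<Prod>i<k. b i (p i))"
    using assms by (auto intro!: prod.cong)
qed

lemma gram_det_0: "gram_det 0 a = 1"
  by (simp add: gram_det_def)

lemma gram_det_id: "gram_det k (\<lambda>i j. if i = j then 1 else 0) = 1"
proof (induction k)
  case 0 then show ?case by (simp add: gram_det_0)
next
  case (Suc k) then show ?case by (subst gram_det_last) auto
qed

lemma gram_det_perm:
  assumes pi: "r permutes {..<k}"
  shows "gram_det k (\<lambda>i j. a (r i) (r j)) = gram_det k a"
  unfolding gram_det_def
proof (rule sum.reindex_bij_witness[where i = "\<lambda>q. Hilbert_Choice.inv r \<circ> q \<circ> r" and j = "\<lambda>p. r \<circ> p \<circ> Hilbert_Choice.inv r"])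
  have ipi: "Hilbert_Choice.inv r permutes {..<k}" using permutes_inv[OF pi] .
  fix p assume p: "p \<in> {p. p permutes {..<k}}"
  then have p: "p permutes {..<k}" by simp
  show "Hilbert_Choice.inv r \<circ> (r \<circ> p \<circ> Hilbert_Choice.inv r) \<circ> r = p"
    using permutes_inverses[OF pi] by (auto simp: fun_eq_iff)
  show "r \<circ> p \<circ> Hilbert_Choice.inv r \<in> {p. p permutes {..<k}}"
    using p pi ipi by (simp add: permutes_compose)
  show "Hilbert_Choice.inv r \<circ> p \<circ> r \<in> {p. p permutes {..<k}}"
    using p pi ipi by (simp add: permutes_compose)
  show "r \<circ> (Hilbert_Choice.inv r \<circ> p \<circ> r) \<circ> Hilbert_Choice.inv r = p"
    using permutes_inverses[OF pi] by (auto simp: fun_eq_iff)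
  have perm: "permutation r" "permutation (Hilbert_Choice.inv r)" "permutation p"
    using pi ipi p by (auto intro: permutation_permutes[THEN iffD2] )
  have "sign (r \<circ> p \<circ> Hilbert_Choice.inv r) = sign p"
    using perm by (simp add: sign_compose permutation_compose sign_inverse)
  moreover have "(\<Prod>i<k. a i ((r \<circ> p \<circ> Hilbert_Choice.inv r) i)) = (\<Prod>i<k. a (r i) (r (p i)))"
  proof -
    have "(\<Prod>i<k. a i ((r \<circ> p \<circ> Hilbert_Choice.inv r) i)) = (\<Prod>i<k. a (r i) ((r \<circ> p \<circ> Hilbert_Choice.inv r) (r i)))"
      by (subst prod.permute[OF pi]) (simp add: comp_def)
    then show ?thesis using permutes_inverses[OF pi] by (simp add: comp_def)
  qed
  ultimately show "of_int (sign (r \<circ> p \<circ> Hilbert_Choice.inv r)) * (\<Prod>i<k. a i ((r \<circ> p \<circ> Hilbert_Choice.inv r) i)) =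
         of_int (sign p) * (\<Prod>i<k. a (r i) (r (p i)))"
    using permutes_inverses[OF pi] by (simp add: comp_def)
qed

lemma vol2_mset:
  assumes "mset xs = mset ys"
  shows "vol2 xs = vol2 ys"
proof -
  obtain p where p: "p permutes {..<length ys}" "permute_list p ys = xs"
    using mset_eq_permutation[OF assms] by blast
  have len: "length xs = length ys" using p by auto
  have "vol2 xs = gram_det (length ys) (\<lambda>i j. inner (ys!(p i)) (ys!(p j)))"
    unfolding vol2_def len
    by (rule gram_det_cong) (use p in \<open>auto simp: permute_list_nth\<close>)
  also have "\<dots> = vol2 ys" unfolding vol2_def by (rule gram_det_perm[OF p(1)])
  finally show ?thesis .
qed

lemma span_list:
  assumes "p \<in> span (set xs)"
  shows "\<exists>c. p = (\<Sum>a<length xs. c a *\<^sub>R xs!a)"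
proof -
  let ?T = "{q. \<exists>c. q = (\<Sum>a<length xs. c a *\<^sub>R xs!a)}"
  have "set xs \<subseteq> ?T"
  proof
    fix x assume "x \<in> set xs"
    then obtain i where i: "i < length xs" "x = xs!i" by (auto simp: in_set_conv_nth)
    have "(\<Sum>a<length xs. (if a = i then 1 else 0) *\<^sub>R xs!a) = (\<Sum>a<length xs. if a = i then xs!a else 0)"
      by (rule sum.cong) auto
    then have "x = (\<Sum>a<length xs. (if a = i then 1 else 0) *\<^sub>R xs!a)"
      using i by simp
    then show "x \<in> ?T" by (intro CollectI exI[of _ "\<lambda>a. if a = i then 1 else 0"])
  qed
  moreover have "subspace ?T"
    unfolding subspace_def
  proof (intro conjI ballI allI)
    show "0 \<in> ?T" by (rule CollectI, rule exI[of _ "\<lambda>_. 0"]) simp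
    fix x y assume "x \<in> ?T" "y \<in> ?T"
    then obtain c d where "x = (\<Sum>a<length xs. c a *\<^sub>R xs!a)" "y = (\<Sum>a<length xs. d a *\<^sub>R xs!a)" by blast
    then have "x + y = (\<Sum>a<length xs. (c a + d a) *\<^sub>R xs!a)" by (simp add: sum.distrib scaleR_add_left)
    then show "x + y \<in> ?T" by (intro CollectI exI[of _ "\<lambda>a. c a + d a"])
  next
    fix r x assume "x \<in> ?T"
    then obtain c where "x = (\<Sum>a<length xs. c a *\<^sub>R xs!a)" by blast
    then have "r *\<^sub>R x = (\<Sum>a<length xs. (r * c a) *\<^sub>R xs!a)" by (simp add: scaleR_sum_right)
    then show "r *\<^sub>R x \<in> ?T" by (intro CollectI exI[of _ "\<lambda>a. r * c a"])
  qed
  ultimately have "span (set xs) \<subseteq> ?T" by (rule span_minimal)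
  with assms show ?thesis by blast
qed

lemma vol2_snoc_orth:
  fixes xs :: "'a::euclidean_space list"
  assumes "\<And>x. x \<in> set xs \<Longrightarrow> inner z x = 0"
  shows "vol2 (xs @ [z]) = inner z z * vol2 xs"
proof -
  let ?k = "length xs"
  have "vol2 (xs @ [z]) = gram_det (Suc ?k) (\<lambda>i j. inner ((xs@[z])!i) ((xs@[z])!j))"
    by (simp add: vol2_def)
  also have "\<dots> = inner z z * gram_det ?k (\<lambda>i j. inner ((xs@[z])!i) ((xs@[z])!j))"
    using gram_det_last[of ?k "\<lambda>i j. inner ((xs@[z])!i) ((xs@[z])!j)"] assms by (simp add: nth_append)
  also have "gram_det ?k (\<lambda>i j. inner ((xs@[z])!i) ((xs@[z])!j)) = vol2 xs"
    unfolding vol2_def by (rule gram_det_cong) (auto simp: nth_append)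
  finally show ?thesis .
qed

lemma vol2_snoc:
  fixes xs :: "'a::euclidean_space list"
  shows "vol2 (xs @ [y]) = (infdist y (span (set xs)))^2 * vol2 xs"
proof -
  obtain p z where p: "p \<in> span (set xs)" and z: "\<And>w. w \<in> span (set xs) \<Longrightarrow> real_inner_class.orthogonal z w"
    and y: "y = p + z"
    using orthogonal_subspace_decomp_exists by blast
  obtain c where c: "p = (\<Sum>a<length xs. c a *\<^sub>R xs!a)" using span_list[OF p] by blast
  let ?k = "length xs"
  define U where "U = (\<lambda>a i. if i < ?k then (if a = i then 1 else 0) else (if a < ?k then c a else (1::real)))"
  have 1: "vol2 (xs @ [y]) = (gram_det (Suc ?k) U)^2 * vol2 (xs @ [z])"
  proof (rule vol2_change)
    fix i assume i: "i < Suc ?k"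
    show "(xs @ [y]) ! i = (\<Sum>a<Suc ?k. U a i *\<^sub>R (xs @ [z]) ! a)"
    proof (cases "i < ?k")
      case True
      have "(\<Sum>a<Suc ?k. U a i *\<^sub>R (xs@[z])!a) = (\<Sum>a<Suc ?k. if a = i then (xs@[z])!a else 0)"
        by (rule sum.cong) (auto simp: U_def True)
      then show ?thesis using True by (simp add: nth_append)
    next
      case False
      then have "i = ?k" using i by simp
      then show ?thesis by (simp add: U_def nth_append y c)
    qed
  qed simp_all
  have "gram_det (Suc ?k) U = U ?k ?k * gram_det ?k U"
    by (rule gram_det_last) (simp add: U_def)
  also have "gram_det ?k U = 1"
    by (subst gram_det_id[symmetric, of ?k], rule gram_det_cong) (simp add: U_def)
  finally have 2: "gram_det (Suc ?k) U = 1" by (simp add: U_def)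
  have orthx: "inner z x = 0" if "x \<in> set xs" for x
    using z[of x] that by (simp add: real_inner_class.orthogonal_def span_base)
  have 3: "vol2 (xs @ [z]) = inner z z * vol2 xs" by (rule vol2_snoc_orth[OF orthx])
  have 4: "infdist y (span (set xs)) = norm z"
  proof (rule antisym)
    show "infdist y (span (set xs)) \<le> norm z"
      using infdist_le[OF p, of y] by (simp add: y dist_norm)
    obtain q where q: "q \<in> span (set xs)" "infdist y (span (set xs)) = dist y q"
      using infdist_attains_inf[of "span (set xs)" y] by (metis closed_span empty_iff span_zero)
    have "real_inner_class.orthogonal z (p - q)" using z p q(1) by (simp add: span_diff)
    then have "(norm (z + (p - q)))^2 = (norm z)^2 + (norm (p - q))^2"
      by (rule norm_add_Pythagorean)
    then have "(norm z)^2 \<le> (norm (z + (p - q)))^2" by simp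
    then have "norm z \<le> norm (z + (p - q))" by (simp add: power_mono_iff)
    also have "z + (p - q) = y - q" by (simp add: y)
    finally show "norm z \<le> infdist y (span (set xs))" using q(2) by (simp add: dist_norm)
  qed
  show ?thesis using 1 2 3 4 by (simp add: power2_norm_eq_inner)
qed


definition vol :: "'a::euclidean_space list \<Rightarrow> real" where
  "vol xs = sqrt (vol2 xs)"

lemma vol2_Nil: "vol2 [] = 1"
  by (simp add: vol2_def gram_det_0)

lemma vol2_nonneg: "vol2 xs \<ge> 0"
proof (induction xs rule: rev_induct)
  case Nil then show ?case by (simp add: vol2_Nil)
next
  case (snoc x xs) then show ?case unfolding vol2_snoc by simp
qed

lemma vol_nonneg: "vol xs \<ge> 0"
  by (simp add: vol_def vol2_nonneg)

lemma vol_snoc: "vol (xs @ [y]) = infdist y (span (set xs)) * vol xs"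
  by (simp add: vol_def vol2_snoc real_sqrt_mult infdist_nonneg)

lemma vol_mset: "mset xs = mset ys \<Longrightarrow> vol xs = vol ys"
  unfolding vol_def by (metis vol2_mset)

lemma infdist_span_pos_iff: fixes y :: "'a::euclidean_space" shows "infdist y (span S) > 0 \<longleftrightarrow> y \<notin> span S"
proof -
  have "y \<in> span S \<longleftrightarrow> infdist y (span S) = 0"
    by (rule in_closed_iff_infdist_zero) (auto intro: span_zero)
  then show ?thesis using infdist_nonneg[of y "span S"] by linarith
qed

lemma vol_pos_iff: "vol xs > 0 \<longleftrightarrow> distinct xs \<and> independent (set xs)"
proof (induction xs rule: rev_induct)
  case Nil
  then show ?case by (simp add: vol_def vol2_Nil independent_empty)
next
  case (snoc y xs)
  have "vol (xs @ [y]) > 0 \<longleftrightarrow> infdist y (span (set xs)) > 0 \<and> vol xs > 0"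
    unfolding vol_snoc using infdist_nonneg[of y "span (set xs)"] vol_nonneg[of xs]
    by (metis mult_pos_pos mult_zero_left mult_zero_right order_less_irrefl order_le_less)
  also have "\<dots> \<longleftrightarrow> y \<notin> span (set xs) \<and> distinct xs \<and> independent (set xs)"
    using infdist_span_pos_iff[of y "set xs"] snoc.IH by blast
  also have "\<dots> \<longleftrightarrow> distinct (xs @ [y]) \<and> independent (set (xs @ [y]))"
  proof -
    have "y \<notin> span (set xs) \<Longrightarrow> y \<notin> set xs" using span_base by blast
    moreover have "set (xs @ [y]) = insert y (set xs)" by simp
    ultimately show ?thesis
      using independent_insert[of y "set xs"] span_base[of y "set xs"] by auto
  qed
  finally show ?case .
qed

lemma infdist_subspace_add:
  fixes S :: "'a::euclidean_space set"
  assumes "subspace S"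
  shows "infdist (x + y) S \<le> infdist x S + infdist y S"
proof -
  have ne: "S \<noteq> {}" and cl: "closed S" using assms by (auto intro: subspace_0 closed_subspace)
  obtain p where p: "p \<in> S" "infdist x S = dist x p" using infdist_attains_inf[OF cl ne] by metis
  obtain q where q: "q \<in> S" "infdist y S = dist y q" using infdist_attains_inf[OF cl ne] by metis
  have "p + q \<in> S" using assms p q by (simp add: subspace_add)
  then have "infdist (x + y) S \<le> dist (x + y) (p + q)" by (rule infdist_le)
  also have "\<dots> \<le> dist x p + dist y q"
    by (simp add: dist_norm) (metis add_diff_add norm_triangle_ineq)
  finally show ?thesis using p q by simp
qed

lemma vol_subadd: "vol (xs @ [x + y]) \<le> vol (xs @ [x]) + vol (xs @ [y])"
  unfolding vol_snoc distrib_right[symmetric]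
  by (rule mult_right_mono[OF infdist_subspace_add[OF subspace_span] vol_nonneg])

lemma vol_snoc_le: "vol (xs @ [y]) \<le> norm y * vol xs"
proof -
  have "infdist y (span (set xs)) \<le> dist y 0" by (rule infdist_le) (rule span_zero)
  then show ?thesis unfolding vol_snoc by (intro mult_right_mono vol_nonneg) simp
qed

lemma vol_map_dependent:
  assumes lin: "linear A" and dep: "\<not> (distinct xs \<and> independent (set xs))"
  shows "vol (map A xs) = 0"
proof -
  have "\<not> (distinct (map A xs) \<and> independent (set (map A xs)))"
  proof
    assume h: "distinct (map A xs) \<and> independent (set (map A xs))"
    then have inj: "inj_on A (set xs)" and dxs: "distinct xs" by (auto simp: distinct_map)
    have ind: "independent (A ` set xs)" using h by simp
    have "inj_on A (span (set xs))"
      by (rule linear_inj_on_span_independent_image[OF lin ind inj])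
    then have "independent (set xs)"
    proof (rule contrapos_pp)
      assume "\<not> independent (set xs)"
      then obtain a where a: "a \<in> set xs" "a \<in> span (set xs - {a})" by (auto simp: dependent_def)
      have "A a \<in> A ` span (set xs - {a})" using a by blast
      also have "\<dots> = span (A ` (set xs - {a}))" by (simp add: linear_span_image[OF lin])
      also have "A ` (set xs - {a}) = A ` set xs - {A a}" using inj a(1) by (auto simp: inj_on_def)
      finally have "dependent (A ` set xs)" using a(1) by (auto simp: dependent_def)
      then show "\<not> inj_on A (span (set xs))" using ind by simp
    qed
    with dep dxs show False by simp
  qed
  then show ?thesis using vol_pos_iff[of "map A xs"] vol_nonneg[of "map A xs"] by linarith
qed

lemma orthonormal_basis_exists:
  fixes V :: "'a::euclidean_space set"
  assumes "subspace V"
  shows "\<exists>b. orthonormal_basis_of V b"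
proof -
  obtain B where B: "B \<subseteq> V" "pairwise real_inner_class.orthogonal B" "\<And>x. x \<in> B \<Longrightarrow> norm x = 1"
    "independent B" "card B = dim V" "span B = V"
    using orthonormal_basis_subspace[OF assms] by metis
  have fin: "finite B" using B(4) by (metis eucl.indep_card_eq_dim_span)
  obtain h where h: "bij_betw h {0..<card B} B" using ex_bij_betw_nat_finite[OF fin] by blast
  have img: "h ` {..<dim V} = B" using h B(5) by (simp add: bij_betw_def atLeast0LessThan)
  have inj: "inj_on h {..<dim V}" using h B(5) by (simp add: bij_betw_def atLeast0LessThan)
  have "orthonormal_basis_of V h"
    unfolding orthonormal_basis_of_def
  proof (intro conjI allI impI)
    fix i j assume i: "i < dim V" and j: "j < dim V"
    have hi: "h i \<in> B" and hj: "h j \<in> B" using img i j by auto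
    show "inner (h i) (h j) = (if i = j then 1 else 0)"
    proof (cases "i = j")
      case True
      then show ?thesis using B(3)[OF hi] by (simp add: norm_eq_1)
    next
      case False
      then have "h i \<noteq> h j" using inj i j by (auto simp: inj_on_def)
      then show ?thesis using B(2) hi hj False
        by (auto simp: pairwise_def real_inner_class.orthogonal_def)
    qed
  next
    show "span (h ` {..<dim V}) = V" using img B(6) by simp
  qed
  then show ?thesis by blast
qed

lemma ob_vol2:
  assumes "orthonormal_basis_of V b" shows "vol2 (map b [0..<dim V]) = 1"
proof -
  have "vol2 (map b [0..<dim V]) = gram_det (dim V) (\<lambda>i j. if i = j then 1 else 0)"
    unfolding vol2_def by (simp, rule gram_det_cong) (use assms in \<open>auto simp: orthonormal_basis_of_def\<close>)
  then show ?thesis by (simp add: gram_det_id)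
qed

lemma ob_in: "orthonormal_basis_of V b \<Longrightarrow> i < dim V \<Longrightarrow> b i \<in> V"
  unfolding orthonormal_basis_of_def by (metis lessThan_iff image_eqI span_base)

lemma ob_expand:
  fixes V :: "'a::euclidean_space set"
  assumes ob: "orthonormal_basis_of V b" and x: "x \<in> V"
  shows "x = (\<Sum>a<dim V. inner x (b a) *\<^sub>R b a)"
proof -
  let ?d = "x - (\<Sum>a<dim V. inner x (b a) *\<^sub>R b a)"
  have sp: "span (b ` {..<dim V}) = V" using ob by (simp add: orthonormal_basis_of_def)
  have orth: "inner ?d (b j) = 0" if j: "j < dim V" for j
  proof -
    have "(\<Sum>a<dim V. inner x (b a) * inner (b a) (b j)) = (\<Sum>a<dim V. if a = j then inner x (b j) else 0)"
      using ob j by (intro sum.cong) (auto simp: orthonormal_basis_of_def)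
    then show ?thesis using j by (simp add: inner_diff_left inner_sum_left)
  qed
  have sV: "subspace V" using sp subspace_span by metis
  have "(\<Sum>a<dim V. inner x (b a) *\<^sub>R b a) \<in> V"
    using ob_in[OF ob] by (intro subspace_sum[OF sV] subspace_scale[OF sV]) auto
  then have dV: "?d \<in> span (b ` {..<dim V})"
    unfolding sp using x sV by (simp add: subspace_diff)
  have "real_inner_class.orthogonal ?d ?d"
    by (rule orthogonal_to_span[OF dV]) (use orth in \<open>auto simp: real_inner_class.orthogonal_def\<close>)
  then have "?d = 0" by (simp add: real_inner_class.orthogonal_def)
  then show ?thesis by simp
qed

lemma abs_det_on_vol: "abs_det_on L V = vol (map (L \<circ> (SOME b. orthonormal_basis_of V b)) [0..<dim V])"
proof -
  define b where "b = (SOME b. orthonormal_basis_of V b)"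
  have "gram_det (dim V) (\<lambda>i j. inner (L (b i)) (L (b j))) = vol2 (map (L \<circ> b) [0..<dim V])"
    unfolding vol2_def by (simp, rule gram_det_cong) simp
  then show ?thesis unfolding abs_det_on_def Let_def vol_def b_def[symmetric] by simp
qed

lemma vol_map_basis:
  fixes F :: "'a::euclidean_space set"
  assumes sF: "subspace F" and lin: "linear L" and fs: "set fs \<subseteq> F" and len: "length fs = dim F"
  shows "vol (map L fs) = vol fs * abs_det_on L F"
proof -
  define b where "b = (SOME b. orthonormal_basis_of F b)"
  have ob: "orthonormal_basis_of F b" unfolding b_def using orthonormal_basis_exists[OF sF] by (rule someI_ex)
  define k where "k = dim F"
  define U where "U = (\<lambda>a i. inner (fs!i) (b a))"
  have exp: "fs!i = (\<Sum>a<k. U a i *\<^sub>R b a)" if "i < k" for i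
    unfolding U_def k_def by (rule ob_expand[OF ob]) (use fs len that k_def in auto)
  have 1: "vol2 fs = (gram_det k U)^2 * vol2 (map b [0..<k])"
    by (rule vol2_change) (use len exp k_def in auto)
  have 2: "vol2 (map L fs) = (gram_det k U)^2 * vol2 (map (L \<circ> b) [0..<k])"
  proof (rule vol2_change)
    fix i assume i: "i < k"
    have "L (fs!i) = (\<Sum>a<k. U a i *\<^sub>R L (b a))"
      by (subst exp[OF i]) (simp add: linear_sum[OF lin] linear_scale[OF lin])
    then show "map L fs ! i = (\<Sum>a<k. U a i *\<^sub>R map (L \<circ> b) [0..<k] ! a)"
      using i len k_def by simp
  qed (use len k_def in auto)
  have 3: "vol2 (map b [0..<k]) = 1" using ob_vol2[OF ob] k_def by simp
  have "vol (map L fs) = \<bar>gram_det k U\<bar> * vol (map (L \<circ> b) [0..<k])"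
    unfolding vol_def 2 by (simp add: real_sqrt_mult)
  also have "vol (map (L \<circ> b) [0..<k]) = abs_det_on L F"
    unfolding abs_det_on_vol b_def k_def ..
  also have "\<bar>gram_det k U\<bar> = vol fs" unfolding vol_def 1 3 by simp
  finally show ?thesis .
qed


lemma leaf:
  fixes A :: "nat \<Rightarrow> 'a::euclidean_space \<Rightarrow> 'a" and E F :: "'a set"
  assumes lin: "\<And>n. linear (A n)" and sE: "subspace E" and sF: "subspace F" and C: "C > 0"
    and dom: "\<And>n e f. e \<in> E \<Longrightarrow> f \<in> F \<Longrightarrow> e \<noteq> 0 \<Longrightarrow> f \<noteq> 0 \<Longrightarrow>
                 norm (A n e) / norm e \<le> C * (norm (A n f) / norm f)"
  shows "set fs \<subseteq> F \<Longrightarrow> set es \<subseteq> E \<Longrightarrow> length fs + length es = dim F \<Longrightarrow>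
    \<exists>K. \<forall>n. prod_list (map (\<lambda>e. norm (A n e)) es) * vol (map (A n) fs) \<le> K * abs_det_on (A n) F"
proof (induction es arbitrary: fs)
  case Nil
  then show ?case using vol_map_basis[OF sF lin] by (intro exI[of _ "vol fs"]) simp
next
  case (Cons e es)
  have Pnn: "prod_list (map (\<lambda>e. norm (A n e)) es) \<ge> 0" for n by (induction es) auto
  show ?case
  proof (cases "e = 0 \<or> \<not> (distinct fs \<and> independent (set fs))")
    case True
    have z: "prod_list (map (\<lambda>e. norm (A n e)) (e # es)) * vol (map (A n) fs) = 0" for n
    proof (cases "e = 0")
      case True then show ?thesis using linear_0[OF lin] by simp
    next
      case False
      then have "vol (map (A n) fs) = 0" using True vol_map_dependent[OF lin] by blast
      then show ?thesis by simp
    qed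
    show ?thesis by (intro exI[of _ 0] allI) (simp only: z mult_zero_left order_refl)
  next
    case False
    then have e0: "e \<noteq> 0" and dfs: "distinct fs" and ifs: "independent (set fs)" by auto
    have eE: "e \<in> E" and esE: "set es \<subseteq> E" using Cons.prems by auto
    have spF: "span (set fs) \<subseteq> F" using Cons.prems(1) sF by (rule span_minimal)
    have "\<not> F \<subseteq> span (set fs)"
    proof
      assume "F \<subseteq> span (set fs)"
      then have "dim F \<le> dim (span (set fs))" by (rule dim_subset)
      also have "\<dots> = length fs" using ifs dfs by (simp add: dim_span dim_eq_card_independent distinct_card)
      finally show False using Cons.prems(3) by simp
    qed
    then obtain g where gF: "g \<in> F" and gn: "g \<notin> span (set fs)" by blast
    define d where "d = infdist g (span (set fs))"
    have dpos: "d > 0" unfolding d_def using gn infdist_span_pos_iff by blast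
    obtain K' where K': "\<And>n. prod_list (map (\<lambda>e. norm (A n e)) es) * vol (map (A n) (fs @ [g])) \<le> K' * abs_det_on (A n) F"
      using Cons.IH[of "fs @ [g]"] Cons.prems gF by auto
    show ?thesis
    proof (intro exI[of _ "C * norm e / d * K'"] allI)
      fix n
      let ?S = "span (set (map (A n) fs))"
      let ?P = "prod_list (map (\<lambda>e. norm (A n e)) es)"
      have key: "norm (A n e) * d \<le> C * norm e * infdist (A n g) ?S"
      proof -
        have S: "?S = A n ` span (set fs)" by (simp add: linear_span_image[OF lin])
        have ne: "?S \<noteq> {}" by (auto intro: span_zero)
        obtain q where q: "q \<in> ?S" "infdist (A n g) ?S = dist (A n g) q"
          using infdist_attains_inf[OF closed_span ne] by metis
        then obtain w where w: "w \<in> span (set fs)" "q = A n w" using S by auto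
        have gw: "g - w \<in> F" using gF w(1) spF sF by (auto intro: subspace_diff)
        have gw0: "g - w \<noteq> 0" using gn w(1) by auto
        have dle: "d \<le> norm (g - w)" unfolding d_def using infdist_le[OF w(1), of g] by (simp add: dist_norm)
        have "norm (A n e) / norm e \<le> C * (norm (A n (g - w)) / norm (g - w))"
          by (rule dom[OF eE gw e0 gw0])
        then have "norm (A n e) * norm (g - w) \<le> C * norm e * norm (A n (g - w))"
          using e0 gw0 by (simp add: field_simps)
        moreover have "norm (A n e) * d \<le> norm (A n e) * norm (g - w)"
          using dle by (simp add: mult_left_mono)
        moreover have "norm (A n (g - w)) = infdist (A n g) ?S"
          using q w by (simp add: linear_diff[OF lin] dist_norm)
        ultimately show ?thesis by simp
      qed
      have vs: "vol (map (A n) (fs @ [g])) = infdist (A n g) ?S * vol (map (A n) fs)"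
        by (simp add: vol_snoc)
      have "d * (prod_list (map (\<lambda>e. norm (A n e)) (e # es)) * vol (map (A n) fs))
          = ?P * vol (map (A n) fs) * (norm (A n e) * d)" by (simp add: mult_ac)
      also have "\<dots> \<le> ?P * vol (map (A n) fs) * (C * norm e * infdist (A n g) ?S)"
        using key Pnn[of n] vol_nonneg[of "map (A n) fs"] by (intro mult_left_mono) auto
      also have "\<dots> = C * norm e * (?P * vol (map (A n) (fs @ [g])))"
        unfolding vs by (simp add: mult_ac)
      also have "\<dots> \<le> C * norm e * (K' * abs_det_on (A n) F)"
        using K'[of n] C by (intro mult_left_mono) auto
      finally have "d * (prod_list (map (\<lambda>e. norm (A n e)) (e # es)) * vol (map (A n) fs))
          \<le> C * norm e * (K' * abs_det_on (A n) F)" .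
      then show "prod_list (map (\<lambda>e. norm (A n e)) (e # es)) * vol (map (A n) fs)
          \<le> C * norm e / d * K' * abs_det_on (A n) F"
        using dpos by (simp add: field_simps)
    qed
  qed
qed

lemma expand:
  fixes A :: "nat \<Rightarrow> 'a::euclidean_space \<Rightarrow> 'a" and E F W :: "'a set"
  assumes lin: "\<And>n. linear (A n)" and sE: "subspace E" and sF: "subspace F" and C: "C > 0"
    and dom: "\<And>n e f. e \<in> E \<Longrightarrow> f \<in> F \<Longrightarrow> e \<noteq> 0 \<Longrightarrow> f \<noteq> 0 \<Longrightarrow>
                 norm (A n e) / norm e \<le> C * (norm (A n f) / norm f)"
    and W: "\<And>w. w \<in> W \<Longrightarrow> \<exists>e\<in>E. \<exists>f\<in>F. w = e + f"
  shows "set ws \<subseteq> W \<Longrightarrow> set fs \<subseteq> F \<Longrightarrow> set es \<subseteq> E \<Longrightarrow> length ws + length fs + length es = dim F \<Longrightarrow>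
    \<exists>K. \<forall>n. prod_list (map (\<lambda>e. norm (A n e)) es) * vol (map (A n) (ws @ fs)) \<le> K * abs_det_on (A n) F"
proof (induction ws arbitrary: fs es)
  case Nil
  then show ?case using leaf[OF lin sE sF C dom, of fs es] by simp
next
  case (Cons w ws)
  obtain e f where e: "e \<in> E" and f: "f \<in> F" and w: "w = e + f" using W Cons.prems(1) by force
  obtain K1 where K1: "\<And>n. prod_list (map (\<lambda>e. norm (A n e)) es) * vol (map (A n) (ws @ (fs @ [f]))) \<le> K1 * abs_det_on (A n) F"
    using Cons.IH[of "fs @ [f]" es] Cons.prems f by auto
  obtain K2 where K2: "\<And>n. prod_list (map (\<lambda>e. norm (A n e)) (e # es)) * vol (map (A n) (ws @ fs)) \<le> K2 * abs_det_on (A n) F"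
    using Cons.IH[of fs "e # es"] Cons.prems e by auto
  have Pnn: "prod_list (map (\<lambda>e. norm (A n e)) es) \<ge> 0" for n by (induction es) auto
  show ?case
  proof (intro exI[of _ "K1 + K2"] allI)
    fix n
    let ?P = "prod_list (map (\<lambda>e. norm (A n e)) es)"
    let ?L = "map (A n) (ws @ fs)"
    have "vol (map (A n) ((w # ws) @ fs)) = vol (?L @ [A n f + A n e])"
      by (rule vol_mset) (simp add: w linear_add[OF lin] add.commute)
    also have "\<dots> \<le> vol (?L @ [A n f]) + vol (?L @ [A n e])" by (rule vol_subadd)
    also have "\<dots> \<le> vol (map (A n) (ws @ (fs @ [f]))) + norm (A n e) * vol ?L"
      using vol_snoc_le[of ?L "A n e"] by simp
    finally have "?P * vol (map (A n) ((w # ws) @ fs)) \<le> ?P * (vol (map (A n) (ws @ (fs @ [f]))) + norm (A n e) * vol ?L)"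
      using Pnn[of n] by (intro mult_left_mono) auto
    also have "\<dots> = ?P * vol (map (A n) (ws @ (fs @ [f]))) + prod_list (map (\<lambda>e. norm (A n e)) (e # es)) * vol ?L"
      by (simp add: algebra_simps)
    also have "\<dots> \<le> K1 * abs_det_on (A n) F + K2 * abs_det_on (A n) F"
      using K1[of n] K2[of n] by (rule add_mono)
    finally show "?P * vol (map (A n) ((w # ws) @ fs)) \<le> (K1 + K2) * abs_det_on (A n) F"
      by (simp add: algebra_simps)
  qed
qed

lemma core:
  fixes A :: "nat \<Rightarrow> 'a::euclidean_space \<Rightarrow> 'a" and E F W V :: "'a set"
  assumes lin: "\<And>n. linear (A n)" and sE: "subspace E" and sF: "subspace F" and C: "C > 0"
    and dom: "\<And>n e f. e \<in> E \<Longrightarrow> f \<in> F \<Longrightarrow> e \<noteq> 0 \<Longrightarrow> f \<noteq> 0 \<Longrightarrow>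
                 norm (A n e) / norm e \<le> C * (norm (A n f) / norm f)"
    and W: "\<And>w. w \<in> W \<Longrightarrow> \<exists>e\<in>E. \<exists>f\<in>F. w = e + f"
    and sV: "subspace V" and VW: "V \<subseteq> W" and dV: "dim V = dim F"
  shows "\<exists>K. \<forall>n. abs_det_on (A n) V \<le> K * abs_det_on (A n) F"
proof -
  define b where "b = (SOME b. orthonormal_basis_of V b)"
  have ob: "orthonormal_basis_of V b" unfolding b_def using orthonormal_basis_exists[OF sV] by (rule someI_ex)
  have ws: "set (map b [0..<dim V]) \<subseteq> W" using ob_in[OF ob] VW by auto
  have "\<exists>K. \<forall>n. prod_list (map (\<lambda>e. norm (A n e)) []) * vol (map (A n) (map b [0..<dim V] @ [])) \<le> K * abs_det_on (A n) F"
    by (rule expand[OF lin sE sF C dom W]) (use ws dV in auto)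
  then obtain K where K: "\<And>n. prod_list (map (\<lambda>e. norm (A n e)) []) * vol (map (A n) (map b [0..<dim V] @ [])) \<le> K * abs_det_on (A n) F"
    by blast
  have "abs_det_on (A n) V = vol (map (A n) (map b [0..<dim V]))" for n
    unfolding abs_det_on_vol b_def by simp
  then show ?thesis using K by (intro exI[of _ K]) simp
qed



lemma abs_det_on_pos:
  fixes V :: "'a::euclidean_space set"
  assumes sV: "subspace V" and lin: "linear L" and inj: "inj_on L V"
  shows "abs_det_on L V > 0"
proof -
  define b where "b = (SOME b. orthonormal_basis_of V b)"
  have ob: "orthonormal_basis_of V b" unfolding b_def using orthonormal_basis_exists[OF sV] by (rule someI_ex)
  let ?bs = "map b [0..<dim V]"
  have "vol ?bs > 0" using ob_vol2[OF ob] by (simp add: vol_def)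
  then have d: "distinct ?bs" and i: "independent (set ?bs)" using vol_pos_iff by blast+
  have sp0: "span (b ` {0..<dim V}) = V" using ob by (simp add: orthonormal_basis_of_def atLeast0LessThan)
  then have sp: "span (set ?bs) = V" by simp
  have "independent (L ` set ?bs)"
    by (rule linear_independent_injective_image[OF lin i]) (simp add: sp0 inj)
  moreover have "distinct (map L ?bs)"
  proof -
    have bV: "set ?bs \<subseteq> V" using sp span_base by blast
    have "inj_on L (set ?bs)" using inj_on_subset[OF inj bV] .
    then show ?thesis using d unfolding distinct_map by blast
  qed
  moreover have "vol (map L ?bs) > 0 \<longleftrightarrow> distinct (map L ?bs) \<and> independent (set (map L ?bs))"
    by (rule vol_pos_iff)
  moreover have "set (map L ?bs) = L ` set ?bs" by (rule set_map)
  ultimately have "vol (map L ?bs) > 0" by metis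
  then show ?thesis unfolding abs_det_on_vol b_def[symmetric] by simp
qed

lemma limsup_compare:
  fixes a b :: "nat \<Rightarrow> real"
  assumes "\<And>n. n > 0 \<Longrightarrow> a n \<le> b n + c / real n"
  shows "limsup (\<lambda>n. ereal (a n)) \<le> limsup (\<lambda>n. ereal (b n))"
proof -
  have "limsup (\<lambda>n. ereal (a n)) \<le> limsup (\<lambda>n. ereal (c / real n) + ereal (b n))"
  proof (rule Limsup_mono)
    show "\<forall>\<^sub>F n in sequentially. ereal (a n) \<le> ereal (c / real n) + ereal (b n)"
      using eventually_gt_at_top[of 0]
    proof eventually_elim
      case (elim n)
      then have "a n \<le> c / real n + b n" using assms[of n] by simp
      then show ?case by simp
    qed
  qed
  also have "\<dots> = ereal 0 + limsup (\<lambda>n. ereal (b n))"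
  proof (rule ereal_limsup_lim_add)
    have "(\<lambda>n. c / real n) \<longlonglongrightarrow> 0" by (rule lim_const_over_n)
    then show "(\<lambda>n. ereal (c / real n)) \<longlonglongrightarrow> ereal 0" by (rule tendsto_ereal)
  qed simp
  finally show ?thesis by (simp add: zero_ereal_def[symmetric])
qed

lemma tangent_step:
  fixes M :: "'a::euclidean_space set"
  assumes diffeo: "C1_diffeo_on M f Df" and y: "y \<in> M" and v: "v \<in> tangent_space M y"
  shows "Df y v \<in> tangent_space M (f y)"
    and "\<exists>h. \<forall>w \<in> tangent_space M y. h (Df y w) = w"
proof -
  note D = diffeo[unfolded C1_diffeo_on_def]
  note D1 = D[THEN conjunct1]
  note fM = D[THEN conjunct2, THEN conjunct1]
  note D3 = D[THEN conjunct2, THEN conjunct2, THEN conjunct2]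
  have fin: "f z \<in> M" if "z \<in> M" for z
  proof -
    have "f z \<in> f ` M" using that by (rule imageI)
    then show ?thesis using fM by simp
  qed
  from D1 obtain U where U: "open U" "M \<subseteq> U" "\<forall>z\<in>U. (f has_derivative blinfun_apply (Df z)) (at z)"
    by blast
  from D3 obtain U' g where U'0: "M \<subseteq> U'" "C1_on U' g" and gf: "\<forall>x\<in>M. g (f x) = x"
    by blast
  from U'0(2) obtain g' where U'2: "\<forall>z\<in>U'. (g has_derivative blinfun_apply (g' z)) (at z)"
    unfolding C1_on_def by blast
  note U' = U'0(1) U'2
  have step: "((f \<circ> \<gamma>) has_vector_derivative Df y w) (at 0) \<and> (\<forall>t. (f \<circ> \<gamma>) t \<in> M) \<and> (f \<circ> \<gamma>) 0 = f y
      \<and> blinfun_apply (g' (f y)) (Df y w) = w"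
    if g: "\<forall>t. \<gamma> t \<in> M" "\<gamma> 0 = y" "(\<gamma> has_vector_derivative w) (at 0)" for \<gamma> w
  proof -
    have "y \<in> U" using U(2) y by blast
    then have df: "(f has_derivative blinfun_apply (Df y)) (at (\<gamma> 0))" using U(3) g(2) by blast
    have "((\<lambda>t. f (\<gamma> t)) has_derivative (\<lambda>t. Df y (t *\<^sub>R w))) (at 0)"
      using has_derivative_compose[OF g(3)[unfolded has_vector_derivative_def] df] .
    then have fd: "((f \<circ> \<gamma>) has_vector_derivative Df y w) (at 0)"
      by (simp add: has_vector_derivative_def blinfun.scaleR_right comp_def)
    have "f y \<in> U'" using U'(1) fin[OF y] by blast
    then have dg: "(g has_derivative blinfun_apply (g' (f y))) (at ((f \<circ> \<gamma>) 0))"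
      using U'(2) g(2) by auto
    have "((\<lambda>t. g ((f \<circ> \<gamma>) t)) has_derivative (\<lambda>t. g' (f y) (t *\<^sub>R Df y w))) (at 0)"
      using has_derivative_compose[OF fd[unfolded has_vector_derivative_def] dg] .
    then have "((\<lambda>t. g ((f \<circ> \<gamma>) t)) has_vector_derivative g' (f y) (Df y w)) (at 0)"
      by (simp add: has_vector_derivative_def blinfun.scaleR_right)
    moreover have "(\<lambda>t. g ((f \<circ> \<gamma>) t)) = \<gamma>" using gf g(1) by (simp add: fun_eq_iff)
    ultimately have "(\<gamma> has_vector_derivative g' (f y) (Df y w)) (at 0)" by simp
    then have "g' (f y) (Df y w) = w" using g(3) by (rule vector_derivative_unique_at)
    moreover have "\<forall>t. (f \<circ> \<gamma>) t \<in> M" using g(1) fin by simp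
    ultimately show ?thesis using fd g(2) by simp
  qed
  from v obtain \<gamma> where "\<forall>t. \<gamma> t \<in> M" "\<gamma> 0 = y" "(\<gamma> has_vector_derivative v) (at 0)"
    unfolding tangent_space_def by blast
  from step[OF this] show "Df y v \<in> tangent_space M (f y)"
    unfolding tangent_space_def by blast
  show "\<exists>h. \<forall>w \<in> tangent_space M y. h (Df y w) = w"
  proof (intro exI[of _ "blinfun_apply (g' (f y))"] ballI)
    fix w assume "w \<in> tangent_space M y"
    then obtain \<gamma> where "\<forall>t. \<gamma> t \<in> M" "\<gamma> 0 = y" "(\<gamma> has_vector_derivative w) (at 0)"
      unfolding tangent_space_def by blast
    from step[OF this] show "g' (f y) (Df y w) = w" by simp
  qed
qed

lemma dfn_props:
  fixes M :: "'a::euclidean_space set"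
  assumes diffeo: "C1_diffeo_on M f Df" and x: "x \<in> M"
  shows "(f ^^ n) x \<in> M \<and> linear (dfn f Df n x) \<and>
         (\<forall>v \<in> tangent_space M x. dfn f Df n x v \<in> tangent_space M ((f ^^ n) x)) \<and>
         inj_on (dfn f Df n x) (tangent_space M x)"
proof (induction n)
  case 0
  have "linear (\<lambda>a::'a. a)" using linear_id unfolding id_def .
  then show ?case using x by simp
next
  case (Suc n)
  have fM: "f ` M = M" using diffeo unfolding C1_diffeo_on_def by blast
  let ?y = "(f ^^ n) x"
  have y: "?y \<in> M" using Suc.IH by blast
  have lin: "linear (dfn f Df (Suc n) x)"
    using Suc.IH by (simp add: linear_compose blinfun.bounded_linear_right bounded_linear.linear)
  have maps: "\<forall>v \<in> tangent_space M x. dfn f Df (Suc n) x v \<in> tangent_space M ((f ^^ Suc n) x)"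
    using Suc.IH tangent_step(1)[OF diffeo y] by simp
  obtain h where h: "\<forall>w \<in> tangent_space M ?y. h (Df ?y w) = w"
    using tangent_step(2)[OF diffeo y] by (metis Suc.IH empty_iff)
  have inj: "inj_on (dfn f Df (Suc n) x) (tangent_space M x)"
  proof (rule inj_onI)
    fix u v assume u: "u \<in> tangent_space M x" and v: "v \<in> tangent_space M x"
      and eq: "dfn f Df (Suc n) x u = dfn f Df (Suc n) x v"
    have "h (Df ?y (dfn f Df n x u)) = h (Df ?y (dfn f Df n x v))" using eq by simp
    then have "dfn f Df n x u = dfn f Df n x v" using h Suc.IH u v by metis
    then show "u = v" using Suc.IH u v by (meson inj_onD)
  qed
  have "(f ^^ Suc n) x \<in> M" using y fM by auto
  then show ?case using lin maps inj by blast
qed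


theorem mainTheorem13:
  fixes M :: "'a::euclidean_space set" and d :: nat
    and f :: "'a \<Rightarrow> 'a" and Df :: "'a \<Rightarrow> 'a \<Rightarrow>\<^sub>L 'a" and E F :: "'a \<Rightarrow> 'a set"
  assumes "compact M" and "C1_submanifold d M"
    and "C1_diffeo_on M f Df"
    and "dominated_splitting M f Df E F"
  shows "\<exists>R. R \<subseteq> M \<and> R \<in> sets borel \<and> f ` R = R \<and>
           (\<forall>\<mu>. invariant_prob M f \<mu> \<longrightarrow> emeasure \<mu> R = 1) \<and>
           (\<forall>x\<in>R. \<forall>V. subspace V \<and> V \<subseteq> tangent_space M x \<and> dim V = dim (F x) \<longrightarrow>
                lyap f Df x V \<le> lyap f Df x (F x))"
proof -
  note diffeo = assms(3)
  have fM: "f ` M = M" using diffeo[unfolded C1_diffeo_on_def, THEN conjunct2, THEN conjunct1] .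
  have borel: "M \<in> sets borel" using assms(1) by (simp add: compact_imp_closed borel_closed)
  have meas: "\<forall>\<mu>. invariant_prob M f \<mu> \<longrightarrow> emeasure \<mu> M = 1" by (simp add: invariant_prob_def)
  note DS = assms(4)[unfolded dominated_splitting_def]
  note spl = DS[THEN conjunct2, THEN conjunct2, THEN conjunct1]
  note domex = DS[THEN conjunct2, THEN conjunct2, THEN conjunct2]
  obtain C l where C: "C > 0" "0 < l" "l < 1" and dom0: "\<forall>k::nat. \<forall>x\<in>M. \<forall>vE\<in>E x. \<forall>vF\<in>F x. vE \<noteq> 0 \<longrightarrow> vF \<noteq> 0 \<longrightarrow>
          norm (dfn f Df k x vE) / norm vE \<le> C * l ^ k * (norm (dfn f Df k x vF) / norm vF)"
    using domex by blast
  have main: "lyap f Df x V \<le> lyap f Df x (F x)"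
    if x: "x \<in> M" and sV: "subspace V" and VT: "V \<subseteq> tangent_space M x" and dV: "dim V = dim (F x)" for x V
  proof -
    define A where "A = (\<lambda>n. dfn f Df n x)"
    have sx: "subspace (E x) \<and> subspace (F x) \<and> E x \<inter> F x = {0} \<and>
        {u + v | u v. u \<in> E x \<and> v \<in> F x} = tangent_space M x"
      using spl x by blast
    then have sE: "subspace (E x)" and sF: "subspace (F x)"
      and T: "{u + v | u v. u \<in> E x \<and> v \<in> F x} = tangent_space M x" by auto
    have props: "linear (A n) \<and> inj_on (A n) (tangent_space M x)" for n
      using dfn_props[OF diffeo x, of n] unfolding A_def by blast
    have lin: "\<And>n. linear (A n)" using props by blast
    have dom: "norm (A n e) / norm e \<le> C * (norm (A n g) / norm g)"
      if e: "e \<in> E x" and g: "g \<in> F x" and e0: "e \<noteq> 0" and g0: "g \<noteq> 0" for n e g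
    proof -
      have "norm (A n e) / norm e \<le> C * l ^ n * (norm (A n g) / norm g)"
        using dom0 x e g e0 g0 unfolding A_def by blast
      also have "\<dots> \<le> C * 1 * (norm (A n g) / norm g)"
        using C by (intro mult_right_mono mult_left_mono) (auto simp: power_le_one)
      finally show ?thesis by simp
    qed
    have W: "\<exists>e\<in>E x. \<exists>g\<in>F x. w = e + g" if "w \<in> tangent_space M x" for w
      using that T[symmetric] by blast
    have "\<exists>K. \<forall>n. abs_det_on (A n) V \<le> K * abs_det_on (A n) (F x)"
    proof (rule core[OF lin sE sF C(1) _ _ sV VT dV])
      show "norm (A n e) / norm e \<le> C * (norm (A n g) / norm g)"
        if "e \<in> E x" "g \<in> F x" "e \<noteq> 0" "g \<noteq> 0" for n e g using dom that by blast
      show "\<exists>e\<in>E x. \<exists>g\<in>F x. w = e + g" if "w \<in> tangent_space M x" for w using W that by blast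
    qed
    then obtain K where K: "\<And>n. abs_det_on (A n) V \<le> K * abs_det_on (A n) (F x)" by blast
    have FT: "F x \<subseteq> tangent_space M x"
    proof
      fix v assume "v \<in> F x"
      then have "0 + v \<in> {u + v | u v. u \<in> E x \<and> v \<in> F x}" using sE by (blast intro: subspace_0)
      then show "v \<in> tangent_space M x" using T by simp
    qed
    have posV: "abs_det_on (A n) V > 0" for n
      using abs_det_on_pos[OF sV lin] props inj_on_subset[OF _ VT] by blast
    have posF: "abs_det_on (A n) (F x) > 0" for n
      using abs_det_on_pos[OF sF lin] props inj_on_subset[OF _ FT] by blast
    define K' where "K' = max K 1"
    have K'pos: "K' > 0" unfolding K'_def by simp
    have ineq: "ln (abs_det_on (A n) V) / real n \<le> ln (abs_det_on (A n) (F x)) / real n + ln K' / real n"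
      if n: "n > 0" for n
    proof -
      have "abs_det_on (A n) V \<le> K' * abs_det_on (A n) (F x)"
        using K[of n] posF[of n] unfolding K'_def
        by (meson max.cobounded1 mult_right_mono order_trans less_imp_le)
      then have "ln (abs_det_on (A n) V) \<le> ln (K' * abs_det_on (A n) (F x))"
        using posV[of n] by simp
      also have "\<dots> = ln K' + ln (abs_det_on (A n) (F x))"
        using K'pos posF[of n] by (simp add: ln_mult)
      finally have "ln (abs_det_on (A n) V) \<le> ln (abs_det_on (A n) (F x)) + ln K'" by simp
      then have "ln (abs_det_on (A n) V) / real n \<le> (ln (abs_det_on (A n) (F x)) + ln K') / real n"
        using n by (simp add: divide_right_mono)
      then show ?thesis by (simp add: add_divide_distrib)
    qed
    have "limsup (\<lambda>n. ereal (ln (abs_det_on (A n) V) / real n))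
        \<le> limsup (\<lambda>n. ereal (ln (abs_det_on (A n) (F x)) / real n))"
      by (rule limsup_compare[OF ineq])
    then show ?thesis unfolding lyap_def A_def .
  qed
  show ?thesis
    by (rule exI[of _ M]) (use fM borel meas main in blast)
qed


end
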